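(* Let $n\geq 3$ and let $u=u_1u_2\cdots u_N$ be a u-p-cycle or a u-p-word for $n$-permutations. If $u_k=\Diamond$, then $u_{k+n}=\Diamond$ and $u_{k-n}=\Diamond$, where in the case of a u-p-word this is asserted only for those of the indices $k+n$, $k-n$ that lie in $\{1,\ldots,N\}$, and in the case of a u-p-cycle the indices are taken modulo $N$.
   Context: An $n$-permutation is a permutation of $\{1,\ldots,n\}$. For a word $w$ of distinct numbers, $\mathrm{red}(w)$ is obtained by replacing the $i$-th smallest letter by $i$. Let $\Diamond$ be a symbol not among the integers. A word $f=f_1\cdots f_n$ over the positive integers together with $\Diamond$, whose integer letters are pairwise distinct, covers an $n$-permutation $\pi$ if one can substitute real numbers for the occurrences of $\Diamond$ (independently) so that the resulting word has $n$ pairwise distinct entries and reduces to $\pi$; equivalently, $f_i<f_j\iff\pi_i<\pi_j$ for all positions $i,j$ holding integers. A u-p-word (universal partial word) for $n$-permutations is a word $u_1\cdots u_N$, $N\geq n$, over this alphabet containing at least one $\Diamond$, such that every factor $u_i\cdots u_{i+n-1}$ ($1\leq i\leq N-n+1$) has pairwise distinct integer letters and every $n$-permutation is covered by exactly one of these factors. A u-p-cycle is a cyclic word $u_1\cdots u_N$, $N\geq n$, containing at least one $\Diamond$, with indices read modulo $N$, satisfying the same conditions for its $N$ cyclic factors $u_iu_{i+1}\cdots u_{i+n-1}$, $1\leq i\leq N$. *)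

theory Defs
  imports Main
begin

text \<open>Letters: None stands for the diamond symbol, Some k for the integer letter k.
  Words are lists; positions are 0-based.\<close>

type_synonym pword = "nat option list"

definition is_nperm :: "nat \<Rightarrow> nat list \<Rightarrow> bool" where
  "is_nperm n p \<longleftrightarrow> length p = n \<and> distinct p \<and> set p = {1..n}"

definition int_letters :: "pword \<Rightarrow> nat list" where
  "int_letters f = map the (filter (\<lambda>x. x \<noteq> None) f)"

definition distinct_ints :: "pword \<Rightarrow> bool" where
  "distinct_ints f \<longleftrightarrow> distinct (int_letters f)"

definition covers :: "pword \<Rightarrow> nat list \<Rightarrow> bool" where
  "covers f p \<longleftrightarrow> length f = length p \<and>
     (\<forall>i<length f. \<forall>j<length f. \<forall>a b. f ! i = Some a \<longrightarrow> f ! j = Some b \<longrightarrow>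
        (a < b \<longleftrightarrow> p ! i < p ! j))"

definition valid_letters :: "pword \<Rightarrow> bool" where
  "valid_letters u \<longleftrightarrow> (\<forall>a. Some a \<in> set u \<longrightarrow> a \<ge> 1) \<and> None \<in> set u"

definition lfactor :: "pword \<Rightarrow> nat \<Rightarrow> nat \<Rightarrow> pword" where
  "lfactor u n i = map (\<lambda>j. u ! (i + j)) [0..<n]"

definition cfactor :: "pword \<Rightarrow> nat \<Rightarrow> nat \<Rightarrow> pword" where
  "cfactor u n i = map (\<lambda>j. u ! ((i + j) mod length u)) [0..<n]"

definition is_upword :: "nat \<Rightarrow> pword \<Rightarrow> bool" where
  "is_upword n u \<longleftrightarrow> length u \<ge> n \<and> valid_letters u \<and>
     (\<forall>i. i + n \<le> length u \<longrightarrow> distinct_ints (lfactor u n i)) \<and>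
     (\<forall>p. is_nperm n p \<longrightarrow> (\<exists>!i. i + n \<le> length u \<and> covers (lfactor u n i) p))"

definition is_upcycle :: "nat \<Rightarrow> pword \<Rightarrow> bool" where
  "is_upcycle n u \<longleftrightarrow> length u \<ge> n \<and> valid_letters u \<and>
     (\<forall>i. i < length u \<longrightarrow> distinct_ints (cfactor u n i)) \<and>
     (\<forall>p. is_nperm n p \<longrightarrow> (\<exists>!i. i < length u \<and> covers (cfactor u n i) p))"

end

theory Submission
  imports Defs
begin


definition rk :: "nat \<Rightarrow> (nat \<Rightarrow> int) \<Rightarrow> nat \<Rightarrow> nat" where
  "rk n v i = Suc (card {j. j < n \<and> v j < v i})"

definition Pm :: "nat \<Rightarrow> (nat \<Rightarrow> int) \<Rightarrow> nat list" where
  "Pm n v = map (rk n v) [0..<n]"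

lemma rk_less:
  assumes inj: "inj_on v {..<n}" and s: "s < n" and t: "t < n"
  shows "rk n v s < rk n v t \<longleftrightarrow> v s < v t"
proof
  assume "v s < v t"
  then have "{j. j < n \<and> v j < v s} \<subset> {j. j < n \<and> v j < v t}"
    using s by auto
  then have "card {j. j < n \<and> v j < v s} < card {j. j < n \<and> v j < v t}"
    by (intro psubset_card_mono) auto
  then show "rk n v s < rk n v t" by (simp add: rk_def)
next
  assume "rk n v s < rk n v t"
  show "v s < v t"
  proof (rule ccontr)
    assume "\<not> v s < v t"
    then have "{j. j < n \<and> v j < v t} \<subseteq> {j. j < n \<and> v j < v s}" by auto
    then have "card {j. j < n \<and> v j < v t} \<le> card {j. j < n \<and> v j < v s}"
      by (intro card_mono) auto
    with \<open>rk n v s < rk n v t\<close> show False by (simp add: rk_def)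
  qed
qed

lemma rk_range:
  assumes "i < n" shows "rk n v i \<in> {1..n}"
proof -
  have "{j. j < n \<and> v j < v i} \<subseteq> {..<n} - {i}" by auto
  then have "card {j. j < n \<and> v j < v i} \<le> card ({..<n} - {i})"
    by (intro card_mono) auto
  also have "\<dots> = n - 1" using assms by simp
  finally show ?thesis using assms by (simp add: rk_def)
qed

lemma Pm_nth: "s < n \<Longrightarrow> Pm n v ! s = rk n v s"
  by (simp add: Pm_def)

lemma Pm_perm:
  assumes inj: "inj_on v {..<n}"
  shows "is_nperm n (Pm n v)"
proof -
  have d: "distinct (Pm n v)"
    unfolding distinct_conv_nth
  proof (intro allI impI)
    fix s t assume "s < length (Pm n v)" "t < length (Pm n v)" "s \<noteq> t"
    then have st: "s < n" "t < n" "s \<noteq> t" by (auto simp: Pm_def)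
    then have "v s \<noteq> v t" using inj by (auto simp: inj_on_def)
    then have "v s < v t \<or> v t < v s" by auto
    then show "Pm n v ! s \<noteq> Pm n v ! t"
      using rk_less[OF inj st(1) st(2)] rk_less[OF inj st(2) st(1)] st
      by (auto simp: Pm_nth)
  qed
  have sub: "set (Pm n v) \<subseteq> {1..n}" using rk_range by (auto simp: Pm_def)
  have "card (set (Pm n v)) = n" using distinct_card[OF d] by (simp add: Pm_def)
  then have "set (Pm n v) = {1..n}"
    using sub by (intro card_subset_eq) auto
  with d show ?thesis by (simp add: is_nperm_def Pm_def)
qed

lemma distinct_ints_pos:
  "distinct_ints f \<Longrightarrow> s < length f \<Longrightarrow> t < length f \<Longrightarrow> f ! s = Some a \<Longrightarrow> f ! t = Some a \<Longrightarrow> s = t"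
proof (induction f arbitrary: s t)
  case Nil then show ?case by simp
next
  case (Cons x f)
  have df: "distinct_ints f" and nx: "x \<noteq> None \<Longrightarrow> the x \<notin> set (int_letters f)"
    using Cons.prems(1) by (auto simp: distinct_ints_def int_letters_def split: if_splits)
  have mem: "j < length f \<Longrightarrow> f ! j = Some a \<Longrightarrow> a \<in> set (int_letters f)" for j
    by (auto simp: int_letters_def in_set_conv_nth[symmetric] intro!: image_eqI[where x="Some a"]) (metis nth_mem)
  show ?case
  proof (cases s)
    case 0
    then show ?thesis using Cons.prems mem nx by (cases t) auto
  next
    case (Suc s')
    then show ?thesis using Cons.prems mem nx Cons.IH[OF df] by (cases t) auto
  qed
qed


definition covf :: "nat \<Rightarrow> (int \<Rightarrow> int option) \<Rightarrow> int \<Rightarrow> (nat \<Rightarrow> int) \<Rightarrow> bool" where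
  "covf n W i v \<longleftrightarrow> (\<forall>s<n. \<forall>t<n. \<forall>a b. W (i + int s) = Some a \<longrightarrow> W (i + int t) = Some b \<longrightarrow>
      (a < b \<longleftrightarrow> v s < v t))"

lemma covfD: "covf n W i v \<Longrightarrow> s < n \<Longrightarrow> t < n \<Longrightarrow> W (i + int s) = Some a \<Longrightarrow> W (i + int t) = Some b
   \<Longrightarrow> (a < b \<longleftrightarrow> v s < v t)"
  unfolding covf_def by blast

definition vlast :: "nat \<Rightarrow> (nat \<Rightarrow> int) \<Rightarrow> int \<Rightarrow> nat \<Rightarrow> int" where
  "vlast n r x s = (if s < n - 1 then r s else x)"

locale sys =
  fixes n :: nat and W :: "int \<Rightarrow> int option" and I :: "int set" and eqv :: "int \<Rightarrow> int \<Rightarrow> bool"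
  assumes n3: "n \<ge> 3"
  and dist: "\<And>i s t a. i \<in> I \<Longrightarrow> s < n \<Longrightarrow> t < n \<Longrightarrow> W (i + int s) = Some a \<Longrightarrow> W (i + int t) = Some a \<Longrightarrow> s = t"
  and ex: "\<And>v. inj_on v {..<n} \<Longrightarrow> \<exists>i\<in>I. covf n W i v"
  and un: "\<And>v i j. inj_on v {..<n} \<Longrightarrow> i \<in> I \<Longrightarrow> j \<in> I \<Longrightarrow> covf n W i v \<Longrightarrow> covf n W j v \<Longrightarrow> eqv i j"
  and eqvW: "\<And>i j x. eqv i j \<Longrightarrow> W (i + x) = W (j + x)"
  and neq1: "\<And>i. \<not> eqv i (i + 1)"
  and neq2: "\<And>i. \<not> eqv (i + 1) i"
begin

definition precomp :: "int \<Rightarrow> (nat \<Rightarrow> int) \<Rightarrow> bool" where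
  "precomp k v \<longleftrightarrow> (\<forall>s<n-1. \<forall>t<n-1. \<forall>a b. W (k + 1 + int s) = Some a \<longrightarrow> W (k + 1 + int t) = Some b \<longrightarrow>
      (a < b \<longleftrightarrow> v s < v t))"

lemma kn: "k + 1 + int (n - 1) = k + int n"
  using n3 by simp

lemma chain:
  assumes k: "k \<in> I" "W k = None" and v: "inj_on v {..<n}" and pre: "precomp k v"
    and i: "i \<in> I" "i - 1 \<in> I" "covf n W i v"
  shows "covf n W (k + 1) v"
proof -
  define Lo where "Lo = {v t | t. t < n - 1 \<and> (\<exists>b c. W (i + int t) = Some b \<and> W (i - 1) = Some c \<and> b < c)}"
  define x where "x = (if Lo = {} then 2 * Min (v ` {..<n}) - 1 else 2 * Max Lo + 1)"
  define v' where "v' = (\<lambda>s. if s = 0 then x else 2 * v (s - 1))"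
  have finLo: "finite Lo" unfolding Lo_def by simp
  have xodd: "odd x" unfolding x_def by (cases "Lo = {}") simp_all
  have key: "b \<noteq> c \<and> (b < c \<longrightarrow> 2 * v t < x) \<and> (c < b \<longrightarrow> x < 2 * v t)"
    if t: "t < n - 1" and b: "W (i + int t) = Some b" and c: "W (i - 1) = Some c" for t b c
  proof -
    have "b \<noteq> c"
    proof
      assume "b = c"
      have "W ((i - 1) + int (Suc t)) = Some b" using b by (simp add: algebra_simps)
      moreover have "W ((i - 1) + int 0) = Some b" using c \<open>b = c\<close> by simp
      moreover have "Suc t < n" using t by simp
      ultimately have "Suc t = 0" using dist[OF i(2), of "Suc t" 0 b] n3 by simp
      then show False by simp
    qed
    moreover have "b < c \<longrightarrow> 2 * v t < x"
    proof
      assume "b < c"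
      then have "v t \<in> Lo" unfolding Lo_def using t b c by blast
      then have "Lo \<noteq> {}" "v t \<le> Max Lo" using finLo by auto
      then show "2 * v t < x" unfolding x_def by simp
    qed
    moreover have "c < b \<longrightarrow> x < 2 * v t"
    proof
      assume "c < b"
      show "x < 2 * v t"
      proof (cases "Lo = {}")
        case True
        have "Min (v ` {..<n}) \<le> v t" using t by (intro Min_le) auto
        then show ?thesis using True unfolding x_def by simp
      next
        case False
        have "Max Lo \<in> Lo" using False finLo by simp
        then obtain t' b' c' where t': "Max Lo = v t'" "t' < n - 1" "W (i + int t') = Some b'"
          "W (i - 1) = Some c'" "b' < c'" unfolding Lo_def by blast
        have "c' = c" using t'(4) c by simp
        have "t' < n" "t < n" using t'(2) t by auto
        then have "b' < b \<longleftrightarrow> v t' < v t" using covfD[OF i(3) _ _ t'(3) b] by blast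
        then have "v t' < v t" using \<open>b' < c'\<close> \<open>c < b\<close> \<open>c' = c\<close> by simp
        then show ?thesis using False t'(1) unfolding x_def by simp
      qed
    qed
    ultimately show ?thesis by blast
  qed
  have cov1: "covf n W (i - 1) v'"
    unfolding covf_def
  proof (intro allI impI)
    fix s t a b
    assume s: "s < n" and t: "t < n" and a: "W (i - 1 + int s) = Some a" and b: "W (i - 1 + int t) = Some b"
    show "a < b \<longleftrightarrow> v' s < v' t"
    proof (cases s)
      case 0
      note s0 = this
      show ?thesis
      proof (cases t)
        case 0 then show ?thesis using s0 a b by simp
      next
        case (Suc t')
        have "W (i + int t') = Some b" using b Suc by (simp add: algebra_simps)
        moreover have "t' < n - 1" using Suc t by simp
        ultimately have K: "b \<noteq> a \<and> (b < a \<longrightarrow> 2 * v t' < x) \<and> (a < b \<longrightarrow> x < 2 * v t')"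
          using key a s0 by simp
        show ?thesis using K s0 Suc unfolding v'_def by auto
      qed
    next
      case (Suc s')
      note sS = this
      have a': "W (i + int s') = Some a" using a Suc by (simp add: algebra_simps)
      show ?thesis
      proof (cases t)
        case 0
        have "s' < n - 1" using sS s by simp
        then have K: "a \<noteq> b \<and> (a < b \<longrightarrow> 2 * v s' < x) \<and> (b < a \<longrightarrow> x < 2 * v s')"
          using key a' b 0 by simp
        show ?thesis using K sS 0 unfolding v'_def by auto
      next
        case (Suc t')
        have b': "W (i + int t') = Some b" using b Suc by (simp add: algebra_simps)
        have "s' < n" "t' < n" using sS Suc s t by auto
        then have "a < b \<longleftrightarrow> v s' < v t'" using covfD[OF i(3) _ _ a' b'] by blast
        then show ?thesis using sS Suc unfolding v'_def by auto
      qed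
    qed
  qed
  have cov2: "covf n W k v'"
    unfolding covf_def
  proof (intro allI impI)
    fix s t a b
    assume s: "s < n" and t: "t < n" and a: "W (k + int s) = Some a" and b: "W (k + int t) = Some b"
    have "s \<noteq> 0"
    proof
      assume "s = 0" then have "W (k + int s) = W k" by simp
      with a k(2) show False by simp
    qed
    have "t \<noteq> 0"
    proof
      assume "t = 0" then have "W (k + int t) = W k" by simp
      with b k(2) show False by simp
    qed
    obtain s' where s': "s = Suc s'" using \<open>s \<noteq> 0\<close> not0_implies_Suc by blast
    obtain t' where t': "t = Suc t'" using \<open>t \<noteq> 0\<close> not0_implies_Suc by blast
    note st = s' t'
    have st': "s' < n - 1" "t' < n - 1" using st s t by auto
    have a': "W (k + 1 + int s') = Some a" using a st by (simp add: algebra_simps)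
    have b': "W (k + 1 + int t') = Some b" using b st by (simp add: algebra_simps)
    have "a < b \<longleftrightarrow> v s' < v t'" using pre a' b' st' unfolding precomp_def by blast
    then show "a < b \<longleftrightarrow> v' s < v' t" using st unfolding v'_def by auto
  qed
  have injv': "inj_on v' {..<n}"
  proof (rule inj_onI)
    fix s t assume s: "s \<in> {..<n}" and t: "t \<in> {..<n}" and e: "v' s = v' t"
    show "s = t"
    proof (cases "s = 0"; cases "t = 0")
      assume "s = 0" "t \<noteq> 0"
      then have "x = 2 * v (t - 1)" using e unfolding v'_def by simp
      then show ?thesis using xodd by auto
    next
      assume "s \<noteq> 0" "t = 0"
      then have "x = 2 * v (s - 1)" using e unfolding v'_def by simp
      then show ?thesis using xodd by auto
    next
      assume "s \<noteq> 0" "t \<noteq> 0"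
      then have "v (s - 1) = v (t - 1)" using e unfolding v'_def by simp
      then have "s - 1 = t - 1" using v s t by (auto simp: inj_on_def)
      then show ?thesis using \<open>s \<noteq> 0\<close> \<open>t \<noteq> 0\<close> by simp
    qed simp
  qed
  have "eqv (i - 1) k" using un[OF injv' i(2) k(1) cov1 cov2] .
  then have Weq: "W (i + x) = W (k + 1 + x)" for x
    using eqvW[of "i - 1" k "1 + x"] by (simp add: algebra_simps)
  show ?thesis using i(3) unfolding covf_def by (simp add: Weq[symmetric])
qed


definition bnd :: "int \<Rightarrow> int" where
  "bnd i = Max ((\<lambda>s. case W (i + int s) of Some b \<Rightarrow> \<bar>b\<bar> | None \<Rightarrow> 0) ` {..<n})"

lemma bnd_ge: "s < n \<Longrightarrow> W (i + int s) = Some b \<Longrightarrow> \<bar>b\<bar> \<le> bnd i"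
  unfolding bnd_def by (rule Max_ge[of _ "\<bar>b\<bar>"]) (auto intro!: image_eqI[where x=s])

lemma bnd_nn: "0 \<le> bnd i"
proof -
  have "(case W (i + int 0) of Some b \<Rightarrow> \<bar>b\<bar> | None \<Rightarrow> 0) \<in> (\<lambda>s. case W (i + int s) of Some b \<Rightarrow> \<bar>b\<bar> | None \<Rightarrow> 0) ` {..<n}"
    using n3 by (intro imageI) auto
  then have "(case W (i + int 0) of Some b \<Rightarrow> \<bar>b\<bar> | None \<Rightarrow> 0) \<le> bnd i"
    unfolding bnd_def by (intro Max_ge) auto
  moreover have "0 \<le> (case W (i + int 0) of Some b \<Rightarrow> \<bar>b\<bar> | None \<Rightarrow> 0)"
    by (cases "W (i + int 0)") auto
  ultimately show ?thesis by linarith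
qed

definition rH :: "int \<Rightarrow> nat \<Rightarrow> int" where
  "rH i s = (case W (i + int s) of Some b \<Rightarrow> 2 * b | None \<Rightarrow> 2 * bnd i + 2 + 2 * int s)"

lemma rH_bounds: "s < n \<Longrightarrow> - 2 * bnd i \<le> rH i s \<and> rH i s \<le> 2 * bnd i + 2 * int n"
  using bnd_ge[of s i] bnd_nn[of i] unfolding rH_def by (cases "W (i + int s)") auto

lemma rH_lt: assumes "s < n - 1" shows "rH i s < 2 * bnd i + 2 * int n + 2 \<and> - 2 * bnd i - 2 < rH i s"
proof -
  have "s < n" using assms by simp
  from rH_bounds[OF this, of i] show ?thesis by simp
qed

lemma rH_even: "rH i s mod 2 = 0"
  unfolding rH_def by (cases "W (i + int s)") auto

lemma rH_inj: assumes "i \<in> I" shows "inj_on (rH i) {..<n}"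
proof (rule inj_onI)
  fix s t assume s: "s \<in> {..<n}" and t: "t \<in> {..<n}" and e: "rH i s = rH i t"
  show "s = t"
  proof (cases "W (i + int s)"; cases "W (i + int t)")
    fix a b assume a: "W (i + int s) = Some a" and b: "W (i + int t) = Some b"
    then have "a = b" using e unfolding rH_def by simp
    then show ?thesis using dist[OF assms, of s t a] a b s t by simp
  next
    fix a assume a: "W (i + int s) = Some a" and b: "W (i + int t) = None"
    have "\<bar>a\<bar> \<le> bnd i" using bnd_ge a s by simp
    then show ?thesis using e a b unfolding rH_def by simp
  next
    fix b assume a: "W (i + int s) = None" and b: "W (i + int t) = Some b"
    have "\<bar>b\<bar> \<le> bnd i" using bnd_ge b t by simp
    then show ?thesis using e a b unfolding rH_def by simp
  next
    assume a: "W (i + int s) = None" and b: "W (i + int t) = None"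
    then show ?thesis using e unfolding rH_def by simp
  qed
qed

lemma vlast_inj:
  assumes "inj_on r {..<n}" "\<And>s. s < n - 1 \<Longrightarrow> r s \<noteq> x"
  shows "inj_on (vlast n r x) {..<n}"
proof (rule inj_onI)
  fix s t assume s: "s \<in> {..<n}" and t: "t \<in> {..<n}" and e: "vlast n r x s = vlast n r x t"
  show "s = t"
  proof (cases "s < n - 1"; cases "t < n - 1")
    assume "s < n - 1" "t < n - 1"
    then show ?thesis using e assms(1) s t unfolding vlast_def inj_on_def by auto
  next
    assume "s < n - 1" "\<not> t < n - 1"
    then show ?thesis using e assms(2)[of s] unfolding vlast_def by auto
  next
    assume "\<not> s < n - 1" "t < n - 1"
    then show ?thesis using e assms(2)[of t] unfolding vlast_def by auto
  next
    assume "\<not> s < n - 1" "\<not> t < n - 1"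
    then show ?thesis using s t by auto
  qed
qed

lemma precomp_rH: "precomp k (vlast n (rH (k + 1)) x)"
  unfolding precomp_def vlast_def rH_def by auto

lemma goodL:
  assumes "k \<in> I" "W k = None" "inj_on v {..<n}" "precomp k v" "\<not> covf n W (k + 1) v"
  shows "\<exists>i\<in>I. covf n W i v \<and> i - 1 \<notin> I"
  using ex[OF assms(3)] chain[OF assms(1,2,3,4)] assms(5) by blast

lemma no_int:
  assumes k: "k \<in> I" "k + 1 \<in> I" "W k = None" and none: "\<And>s. s < n - 1 \<Longrightarrow> W (k + 1 + int s) = None"
  shows False
proof -
  define v where "v = (\<lambda>s::nat. int s)"
  have inj: "inj_on v {..<n}" unfolding v_def by (auto simp: inj_on_def)
  have c1: "covf n W k v"
    unfolding covf_def
  proof (intro allI impI)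
    fix s t a b assume s: "s < n" and a: "W (k + int s) = Some a"
    show "a < b \<longleftrightarrow> v s < v t"
    proof (cases s)
      case 0 then show ?thesis using a k(3) by simp
    next
      case (Suc s')
      then have "W (k + 1 + int s') = None" using none s by simp
      then show ?thesis using a Suc by (simp add: algebra_simps)
    qed
  qed
  have c2: "covf n W (k + 1) v"
    unfolding covf_def
  proof (intro allI impI)
    fix s t a b assume s: "s < n" and t: "t < n" and a: "W (k + 1 + int s) = Some a"
      and b: "W (k + 1 + int t) = Some b"
    have "s = n - 1" using none[of s] a s by (cases "s < n - 1") auto
    moreover have "t = n - 1" using none[of t] b t by (cases "t < n - 1") auto
    ultimately show "a < b \<longleftrightarrow> v s < v t" using a b by simp
  qed
  show False using un[OF inj k(1) k(2) c1 c2] neq1 by simp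
qed

definition vmax :: "int \<Rightarrow> nat \<Rightarrow> int" where
  "vmax k = vlast n (rH (k + 1)) (2 * bnd (k + 1) + 2 * int n + 2)"

definition vmin :: "int \<Rightarrow> nat \<Rightarrow> int" where
  "vmin k = vlast n (rH (k + 1)) (- 2 * bnd (k + 1) - 2)"

lemma vmax_props:
  assumes "k + 1 \<in> I"
  shows "inj_on (vmax k) {..<n}" "precomp k (vmax k)" "\<And>s. s < n - 1 \<Longrightarrow> vmax k s < vmax k (n - 1)"
    "\<And>s. s < n - 1 \<Longrightarrow> vmax k s = rH (k + 1) s"
proof -
  show "inj_on (vmax k) {..<n}" unfolding vmax_def
  proof (rule vlast_inj[OF rH_inj[OF assms]])
    fix s assume "s < n - 1" then show "rH (k + 1) s \<noteq> 2 * bnd (k + 1) + 2 * int n + 2" using rH_lt[of s "k + 1"] by simp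
  qed
  show "precomp k (vmax k)" unfolding vmax_def by (rule precomp_rH)
  show "\<And>s. s < n - 1 \<Longrightarrow> vmax k s < vmax k (n - 1)" unfolding vmax_def vlast_def
    using rH_lt by fastforce
  show "\<And>s. s < n - 1 \<Longrightarrow> vmax k s = rH (k + 1) s" unfolding vmax_def vlast_def by simp
qed

lemma vmin_props:
  assumes "k + 1 \<in> I"
  shows "inj_on (vmin k) {..<n}" "precomp k (vmin k)" "\<And>s. s < n - 1 \<Longrightarrow> vmin k (n - 1) < vmin k s"
    "\<And>s. s < n - 1 \<Longrightarrow> vmin k s = rH (k + 1) s"
proof -
  show "inj_on (vmin k) {..<n}" unfolding vmin_def
  proof (rule vlast_inj[OF rH_inj[OF assms]])
    fix s assume "s < n - 1" then show "rH (k + 1) s \<noteq> - 2 * bnd (k + 1) - 2" using rH_lt[of s "k + 1"] by simp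
  qed
  show "precomp k (vmin k)" unfolding vmin_def by (rule precomp_rH)
  show "\<And>s. s < n - 1 \<Longrightarrow> vmin k (n - 1) < vmin k s" unfolding vmin_def vlast_def
    using rH_lt by fastforce
  show "\<And>s. s < n - 1 \<Longrightarrow> vmin k s = rH (k + 1) s" unfolding vmin_def vlast_def by simp
qed

lemma hi:
  assumes k: "k \<in> I" "k + 1 \<in> I" "W k = None" "W (k + int n) = Some a"
    and j: "j < n - 1" "W (k + 1 + int j) = Some b" "a < b"
  shows "\<exists>i\<in>I. covf n W i (vmax k) \<and> i - 1 \<notin> I"
proof (rule goodL[OF k(1,3) vmax_props(1,2)[OF k(2)]])
  show "\<not> covf n W (k + 1) (vmax k)"
  proof
    assume c: "covf n W (k + 1) (vmax k)"
    have Wn: "W (k + 1 + int (n - 1)) = Some a" using k(4) kn by simp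
    have "j < n" "n - 1 < n" using j(1) n3 by auto
    then have "b < a \<longleftrightarrow> vmax k j < vmax k (n - 1)" using covfD[OF c _ _ j(2) Wn] by blast
    then show False using vmax_props(3)[OF k(2) j(1)] j(3) by simp
  qed
qed

lemma lo:
  assumes k: "k \<in> I" "k + 1 \<in> I" "W k = None" "W (k + int n) = Some a"
    and j: "j < n - 1" "W (k + 1 + int j) = Some b" "b < a"
  shows "\<exists>i\<in>I. covf n W i (vmin k) \<and> i - 1 \<notin> I"
proof (rule goodL[OF k(1,3) vmin_props(1,2)[OF k(2)]])
  show "\<not> covf n W (k + 1) (vmin k)"
  proof
    assume c: "covf n W (k + 1) (vmin k)"
    have Wn: "W (k + 1 + int (n - 1)) = Some a" using k(4) kn by simp
    have "j < n" "n - 1 < n" using j(1) n3 by auto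
    then have "b < a \<longleftrightarrow> vmin k j < vmin k (n - 1)" using covfD[OF c _ _ j(2) Wn] by blast
    then show False using vmin_props(3)[OF k(2) j(1)] j(3) by simp
  qed
qed

lemma int_ne_last:
  assumes "k + 1 \<in> I" "W (k + int n) = Some a" "j < n - 1" "W (k + 1 + int j) = Some b"
  shows "b \<noteq> a"
proof
  assume "b = a"
  have "W (k + 1 + int (n - 1)) = Some a" using assms(2) kn by simp
  then have "j = n - 1" using dist[OF assms(1), of j "n - 1" a] assms(3,4) \<open>b = a\<close> by simp
  then show False using assms(3) by simp
qed

lemma main_cyc:
  assumes U: "I = UNIV" and k: "W k = None" "W (k + int n) = Some a"
  shows False
proof (cases "\<exists>j b. j < n - 1 \<and> W (k + 1 + int j) = Some b")
  case False
  then show False using no_int[of k] U k by auto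
next
  case True
  then obtain j b where j: "j < n - 1" "W (k + 1 + int j) = Some b" by blast
  have "b \<noteq> a" using int_ne_last[of k a j b] U k j by simp
  then have "a < b \<or> b < a" by auto
  then show False
  proof
    assume "a < b"
    from hi[of k a j b] U k j this show False by auto
  next
    assume "b < a"
    from lo[of k a j b] U k j this show False by auto
  qed
qed

lemma vodd_inj:
  assumes "k + 1 \<in> I" shows "inj_on (vlast n (rH (k + 1)) (2 * x + 1)) {..<n}"
proof (rule vlast_inj[OF rH_inj[OF assms]])
  fix s assume "s < n - 1"
  show "rH (k + 1) s \<noteq> 2 * x + 1"
  proof
    assume "rH (k + 1) s = 2 * x + 1"
    then have "rH (k + 1) s mod 2 = 1" by simp
    then show False using rH_even[of "k + 1" s] by simp
  qed
qed

lemma not_last: "s < n \<Longrightarrow> W (i + int s) = Some x \<Longrightarrow> W (i + int (n - 1)) = None \<Longrightarrow> s < n - 1"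
proof (rule ccontr)
  assume "s < n" "W (i + int s) = Some x" "W (i + int (n - 1)) = None" "\<not> s < n - 1"
  then have "s = n - 1" by simp
  with \<open>W (i + int s) = Some x\<close> \<open>W (i + int (n - 1)) = None\<close> show False by simp
qed

lemma last_pos: "s < n \<Longrightarrow> \<not> s < n - 1 \<Longrightarrow> s = n - 1"
  by simp

lemma cov_va:
  assumes k: "k + 1 \<in> I" "W (k + int n) = Some a"
  shows "covf n W (k + 1) (vlast n (rH (k + 1)) (2 * a + 1))"
  unfolding covf_def
proof (intro allI impI)
  fix s t x y assume s: "s < n" and t: "t < n" and x: "W (k + 1 + int s) = Some x"
    and y: "W (k + 1 + int t) = Some y"
  have Wn: "W (k + 1 + int (n - 1)) = Some a" using k(2) kn by simp
  let ?v = "vlast n (rH (k + 1)) (2 * a + 1)"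
  show "x < y \<longleftrightarrow> ?v s < ?v t"
  proof (cases "s < n - 1"; cases "t < n - 1")
    assume "s < n - 1" "t < n - 1"
    then show ?thesis using x y unfolding vlast_def rH_def by simp
  next
    assume a1: "s < n - 1" "\<not> t < n - 1"
    then have "t = n - 1" using t by simp
    then have "y = a" using y Wn by simp
    have "x \<noteq> a" using int_ne_last[OF k(1,2) a1(1) x] .
    then show ?thesis using a1 x \<open>y = a\<close> unfolding vlast_def rH_def by auto
  next
    assume a1: "\<not> s < n - 1" "t < n - 1"
    then have "s = n - 1" using s by simp
    then have "x = a" using x Wn by simp
    then show ?thesis using a1 y unfolding vlast_def rH_def by auto
  next
    assume "\<not> s < n - 1" "\<not> t < n - 1"
    then have "s = t" using s t by simp
    then show ?thesis using x y by simp
  qed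
qed

lemma min_int:
  assumes "\<exists>j<n-1. \<exists>b. W (k + 1 + int j) = Some b"
  shows "\<exists>q<n-1. \<exists>m. W (k + 1 + int q) = Some m \<and> (\<forall>j<n-1. \<forall>b. W (k + 1 + int j) = Some b \<longrightarrow> m \<le> b)"
proof -
  define S where "S = {b. \<exists>j<n-1. W (k + 1 + int j) = Some b}"
  have "S \<subseteq> (\<lambda>j. the (W (k + 1 + int j))) ` {..<n-1}"
  proof
    fix b assume "b \<in> S"
    then obtain j where "j < n - 1" "W (k + 1 + int j) = Some b" unfolding S_def by blast
    then show "b \<in> (\<lambda>j. the (W (k + 1 + int j))) ` {..<n-1}" by (intro image_eqI[of _ _ j]) auto
  qed
  then have fin: "finite S" by (rule finite_subset) simp
  have ne: "S \<noteq> {}" using assms unfolding S_def by auto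
  have "Min S \<in> S" using fin ne by simp
  then obtain q where q: "q < n - 1" "W (k + 1 + int q) = Some (Min S)" unfolding S_def by blast
  have "\<forall>j<n-1. \<forall>b. W (k + 1 + int j) = Some b \<longrightarrow> Min S \<le> b"
  proof (intro allI impI)
    fix j b assume "j < n - 1" "W (k + 1 + int j) = Some b"
    then have "b \<in> S" unfolding S_def by blast
    then show "Min S \<le> b" by (rule Min_le[OF fin])
  qed
  then show ?thesis using q by blast
qed

end

lemma covf_compl: "covf n (\<lambda>x. map_option uminus (W x)) i v \<longleftrightarrow> covf n W i (\<lambda>s. - v s)"
proof
  assume h: "covf n (\<lambda>x. map_option uminus (W x)) i v"
  show "covf n W i (\<lambda>s. - v s)"
    unfolding covf_def
  proof (intro allI impI)
    fix s t a b assume "s < n" "t < n" "W (i + int s) = Some a" "W (i + int t) = Some b"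
    then have "- b < - a \<longleftrightarrow> v t < v s" using covfD[OF h, of t s "- b" "- a"] by simp
    then show "a < b \<longleftrightarrow> - v s < - v t" by simp
  qed
next
  assume h: "covf n W i (\<lambda>s. - v s)"
  show "covf n (\<lambda>x. map_option uminus (W x)) i v"
    unfolding covf_def
  proof (intro allI impI)
    fix s t a b assume st: "s < n" "t < n" and a: "map_option uminus (W (i + int s)) = Some a"
      and b: "map_option uminus (W (i + int t)) = Some b"
    from a obtain a' where a': "W (i + int s) = Some a'" "a = - a'" by auto
    from b obtain b' where b': "W (i + int t) = Some b'" "b = - b'" by auto
    have "b' < a' \<longleftrightarrow> - v t < - v s" using covfD[OF h st(2,1) b'(1) a'(1)] .
    then show "a < b \<longleftrightarrow> v s < v t" using a' b' by auto
  qed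
qed

lemma sys_compl:
  assumes "sys n W I e"
  shows "sys n (\<lambda>x. map_option uminus (W x)) I e"
proof -
  interpret sys n W I e by fact
  show ?thesis
  proof
    show "3 \<le> n" using n3 .
    show "\<And>i s t a. i \<in> I \<Longrightarrow> s < n \<Longrightarrow> t < n \<Longrightarrow> map_option uminus (W (i + int s)) = Some a \<Longrightarrow>
      map_option uminus (W (i + int t)) = Some a \<Longrightarrow> s = t"
      using dist by auto
    show "\<exists>i\<in>I. covf n (\<lambda>x. map_option uminus (W x)) i v" if "inj_on v {..<n}" for v
    proof -
      have "inj_on (\<lambda>s. - v s) {..<n}" using that by (auto simp: inj_on_def)
      then show ?thesis using ex by (auto simp: covf_compl)
    qed
    show "e i j" if "inj_on v {..<n}" "i \<in> I" "j \<in> I" "covf n (\<lambda>x. map_option uminus (W x)) i v"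
      "covf n (\<lambda>x. map_option uminus (W x)) j v" for v i j
    proof -
      have "inj_on (\<lambda>s. - v s) {..<n}" using that(1) by (auto simp: inj_on_def)
      then show ?thesis using un that by (auto simp: covf_compl)
    qed
    show "\<And>i j x. e i j \<Longrightarrow> map_option uminus (W (i + x)) = map_option uminus (W (j + x))"
      using eqvW by simp
    show "\<And>i. \<not> e i (i + 1)" using neq1 .
    show "\<And>i. \<not> e (i + 1) i" using neq2 .
  qed
qed

lemma int_rev: "s < n \<Longrightarrow> int (n - 1 - s) = int n - 1 - int s"
  by (simp add: of_nat_diff)

lemma covf_rev: "covf n (\<lambda>x. W (- x)) i v \<longleftrightarrow> covf n W (- i - int n + 1) (\<lambda>s. v (n - 1 - s))"
proof
  assume h: "covf n (\<lambda>x. W (- x)) i v"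
  show "covf n W (- i - int n + 1) (\<lambda>s. v (n - 1 - s))"
    unfolding covf_def
  proof (intro allI impI)
    fix s t a b assume st: "s < n" "t < n" and a: "W (- i - int n + 1 + int s) = Some a"
      and b: "W (- i - int n + 1 + int t) = Some b"
    have e1: "- (i + int (n - 1 - s)) = - i - int n + 1 + int s" and e2: "- (i + int (n - 1 - t)) = - i - int n + 1 + int t"
      using int_rev[of s n] int_rev[of t n] st by linarith+
    have a': "W (- (i + int (n - 1 - s))) = Some a" unfolding e1 using a .
    have b': "W (- (i + int (n - 1 - t))) = Some b" unfolding e2 using b .
    show "a < b \<longleftrightarrow> v (n - 1 - s) < v (n - 1 - t)"
      using covfD[OF h _ _ a' b'] st by simp
  qed
next
  assume h: "covf n W (- i - int n + 1) (\<lambda>s. v (n - 1 - s))"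
  show "covf n (\<lambda>x. W (- x)) i v"
    unfolding covf_def
  proof (intro allI impI)
    fix s t a b assume st: "s < n" "t < n" and a: "W (- (i + int s)) = Some a"
      and b: "W (- (i + int t)) = Some b"
    have e1: "- i - int n + 1 + int (n - 1 - s) = - (i + int s)" and e2: "- i - int n + 1 + int (n - 1 - t) = - (i + int t)"
      using int_rev[of s n] int_rev[of t n] st by linarith+
    have a': "W (- i - int n + 1 + int (n - 1 - s)) = Some a" unfolding e1 using a .
    have b': "W (- i - int n + 1 + int (n - 1 - t)) = Some b" unfolding e2 using b .
    have "n - 1 - s < n" "n - 1 - t < n" using st by auto
    then have "a < b \<longleftrightarrow> v (n - 1 - (n - 1 - s)) < v (n - 1 - (n - 1 - t))"
      using covfD[OF h _ _ a' b'] by blast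
    then show "a < b \<longleftrightarrow> v s < v t" using st by simp
  qed
qed

lemma sys_rev:
  assumes "sys n W I e"
  shows "sys n (\<lambda>x. W (- x)) ((\<lambda>i. - i - int n + 1) ` I) (\<lambda>i j. e (- i - int n + 1) (- j - int n + 1))"
proof -
  interpret sys n W I e by fact
  have rinj: "inj_on (\<lambda>s. v (n - 1 - s)) {..<n}" if "inj_on v {..<n}" for v
  proof (rule inj_onI)
    fix s t assume s: "s \<in> {..<n}" and t: "t \<in> {..<n}" and e: "v (n - 1 - s) = v (n - 1 - t)"
    have "n - 1 - s \<in> {..<n}" "n - 1 - t \<in> {..<n}" using s t by auto
    then have "n - 1 - s = n - 1 - t" using that e unfolding inj_on_def by blast
    then show "s = t" using s t by simp
  qed
  show ?thesis
  proof
    show "3 \<le> n" using n3 .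
    show "s = t" if "i \<in> (\<lambda>i. - i - int n + 1) ` I" "s < n" "t < n" "W (- (i + int s)) = Some a"
      "W (- (i + int t)) = Some a" for i s t a
    proof -
      from that(1) obtain i0 where i0: "i0 \<in> I" "i = - i0 - int n + 1" by auto
      have e1: "i0 + int (n - 1 - s) = - (i + int s)" and e2: "i0 + int (n - 1 - t) = - (i + int t)"
        using int_rev[of s n] int_rev[of t n] that(2,3) i0(2) by linarith+
      have "W (i0 + int (n - 1 - s)) = Some a" unfolding e1 using that(4) .
      moreover have "W (i0 + int (n - 1 - t)) = Some a" unfolding e2 using that(5) .
      ultimately have "n - 1 - s = n - 1 - t" using dist[OF i0(1)] that(2,3) by auto
      then show "s = t" using that(2,3) by simp
    qed
    show "\<exists>i\<in>(\<lambda>i. - i - int n + 1) ` I. covf n (\<lambda>x. W (- x)) i v" if iv: "inj_on v {..<n}" for v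
    proof -
      obtain i where "i \<in> I" "covf n W i (\<lambda>s. v (n - 1 - s))" using ex[OF rinj[OF iv]] by blast
      moreover have "- (- i - int n + 1) - int n + 1 = i" by simp
      ultimately have "covf n (\<lambda>x. W (- x)) (- i - int n + 1) v"
        using covf_rev[of n W "- i - int n + 1" v] by simp
      then show ?thesis using \<open>i \<in> I\<close> by blast
    qed
    show "e (- i - int n + 1) (- j - int n + 1)" if "inj_on v {..<n}" "i \<in> (\<lambda>i. - i - int n + 1) ` I"
      "j \<in> (\<lambda>i. - i - int n + 1) ` I" "covf n (\<lambda>x. W (- x)) i v" "covf n (\<lambda>x. W (- x)) j v" for v i j
    proof -
      have "- i - int n + 1 \<in> I" "- j - int n + 1 \<in> I" using that(2,3) by auto
      moreover have "covf n W (- i - int n + 1) (\<lambda>s. v (n - 1 - s))" "covf n W (- j - int n + 1) (\<lambda>s. v (n - 1 - s))"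
        using that(4,5) covf_rev[of n W] by blast+
      ultimately show ?thesis using un[OF rinj[OF that(1)]] by blast
    qed
    show "W (- (i + x)) = W (- (j + x))" if "e (- i - int n + 1) (- j - int n + 1)" for i j x
      using eqvW[OF that, of "- x + int n - 1"] by (simp add: algebra_simps)
    show "\<not> e (- i - int n + 1) (- (i + 1) - int n + 1)" for i
      using neq2[of "- i - int n"] by (simp add: algebra_simps)
    show "\<not> e (- (i + 1) - int n + 1) (- i - int n + 1)" for i
      using neq1[of "- i - int n"] by (simp add: algebra_simps)
  qed
qed

locale wsys = sys n W "{L..R}" "(=)" for n :: nat and W :: "int \<Rightarrow> int option" and L R :: int
begin

lemma coverL:
  assumes "i \<in> {L..R}" "i - 1 \<notin> {L..R}" shows "i = L"
  using assms by auto

end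

lemma wsys_compl: "wsys n W L R \<Longrightarrow> wsys n (\<lambda>x. map_option uminus (W x)) L R"
  unfolding wsys_def by (rule sys_compl)

lemma wsys_rev:
  assumes "wsys n W L R"
  shows "wsys n (\<lambda>x. W (- x)) (- R - int n + 1) (- L - int n + 1)"
proof -
  have s: "sys n (\<lambda>x. W (- x)) ((\<lambda>i. - i - int n + 1) ` {L..R}) (\<lambda>i j. (- i - int n + 1) = (- j - int n + 1))"
    using sys_rev assms unfolding wsys_def by blast
  have e1: "(\<lambda>i. - i - int n + 1) ` {L..R} = {- R - int n + 1 .. - L - int n + 1}"
  proof
    show "(\<lambda>i. - i - int n + 1) ` {L..R} \<subseteq> {- R - int n + 1 .. - L - int n + 1}" by auto
    show "{- R - int n + 1 .. - L - int n + 1} \<subseteq> (\<lambda>i. - i - int n + 1) ` {L..R}"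
    proof
      fix x assume "x \<in> {- R - int n + 1 .. - L - int n + 1}"
      then have "- x - int n + 1 \<in> {L..R}" "x = - (- x - int n + 1) - int n + 1" by auto
      then show "x \<in> (\<lambda>i. - i - int n + 1) ` {L..R}" by blast
    qed
  qed
  have e2: "(\<lambda>i j. (- i - int n + 1) = (- j - int n + 1)) = (=)" by (intro ext) auto
  show ?thesis using s unfolding e1 e2 wsys_def .
qed

context wsys
begin

lemma self: "wsys n W L R"
  unfolding wsys_def by (rule sys_axioms)

lemma atL: "\<exists>i\<in>{L..R}. covf n W i v \<and> i - 1 \<notin> {L..R} \<Longrightarrow> covf n W L v"
proof -
  assume "\<exists>i\<in>{L..R}. covf n W i v \<and> i - 1 \<notin> {L..R}"
  then obtain i where "i \<in> {L..R}" "covf n W i v" "i - 1 \<notin> {L..R}" by blast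
  then have "i = L" by auto
  then show ?thesis using \<open>covf n W i v\<close> by simp
qed

lemma twosided:
  assumes k: "k \<in> {L..R}" "k + 1 \<in> {L..R}" "W k = None" "W (k + int n) = Some a"
    and j1: "j1 < n - 1" "W (k + 1 + int j1) = Some b1" "a < b1"
    and j2: "j2 < n - 1" "W (k + 1 + int j2) = Some b2" "b2 < a"
  shows False
proof -
  have cM: "covf n W L (vmax k)" using hi[OF k j1] by (rule atL)
  have cm: "covf n W L (vmin k)" using lo[OF k j2] by (rule atL)
  define va where "va = vlast n (rH (k + 1)) (2 * a + 1)"
  have injva: "inj_on va {..<n}" unfolding va_def by (rule vodd_inj[OF k(2)])
  have ca: "covf n W (k + 1) va" unfolding va_def by (rule cov_va[OF k(2,4)])
  have n1: "n - 1 < n" using n3 by simp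
  have cL: "covf n W L va"
    unfolding covf_def
  proof (intro allI impI)
    fix s t x y assume s: "s < n" and t: "t < n" and x: "W (L + int s) = Some x"
      and y: "W (L + int t) = Some y"
    show "x < y \<longleftrightarrow> va s < va t"
    proof (cases "s < n - 1"; cases "t < n - 1")
      assume a1: "s < n - 1" "t < n - 1"
      have "x < y \<longleftrightarrow> vmax k s < vmax k t" using covfD[OF cM s t x y] .
      then show ?thesis using a1 unfolding va_def vmax_def vlast_def by simp
    next
      assume a1: "s < n - 1" "\<not> t < n - 1"
      then have "t = n - 1" using t by simp
      have "x < y \<longleftrightarrow> vmax k s < vmax k (n - 1)" using covfD[OF cM s t x y] \<open>t = n - 1\<close> by simp
      moreover have "x < y \<longleftrightarrow> vmin k s < vmin k (n - 1)" using covfD[OF cm s t x y] \<open>t = n - 1\<close> by simp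
      ultimately show ?thesis using vmax_props(3)[OF k(2) a1(1)] vmin_props(3)[OF k(2) a1(1)] by simp
    next
      assume a1: "\<not> s < n - 1" "t < n - 1"
      then have "s = n - 1" using s by simp
      have "y < x \<longleftrightarrow> vmax k t < vmax k (n - 1)" using covfD[OF cM t s y x] \<open>s = n - 1\<close> by simp
      moreover have "y < x \<longleftrightarrow> vmin k t < vmin k (n - 1)" using covfD[OF cm t s y x] \<open>s = n - 1\<close> by simp
      ultimately show ?thesis using vmax_props(3)[OF k(2) a1(2)] vmin_props(3)[OF k(2) a1(2)] by simp
    next
      assume "\<not> s < n - 1" "\<not> t < n - 1"
      then have "s = t" using s t by simp
      then show ?thesis using x y by simp
    qed
  qed
  have "L = k + 1" using un[OF injva _ k(2) cL ca] k(1) by auto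
  then show False using k(1) by simp
qed

lemma struct:
  assumes k: "k \<in> {L..R}" "k + 1 \<in> {L..R}" "W k = None" "W (k + int n) = Some a"
    and q: "q < n - 1" "W (k + 1 + int q) = Some m" "a < m"
    and mn: "\<forall>j<n-1. \<forall>b. W (k + 1 + int j) = Some b \<longrightarrow> m \<le> b"
  shows "(\<forall>s<n-1. s \<noteq> q \<longrightarrow> W (L + int s) = None) \<and>
         (\<exists>e c. W (L + int q) = Some e \<and> W (L + int (n - 1)) = Some c \<and> e < c)"
proof -
  have Wn: "W (k + 1 + int (n - 1)) = Some a" using k(4) kn by simp
  have n1: "n - 1 < n" using n3 by simp
  have qn: "q < n" using q(1) by simp
  have cM: "covf n W L (vmax k)" using hi[OF k q] by (rule atL)
  define v2 where "v2 = vlast n (rH (k + 1)) (2 * m + 1)"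
  define va where "va = vlast n (rH (k + 1)) (2 * a + 1)"
  have v2s: "\<And>s. s < n - 1 \<Longrightarrow> v2 s = rH (k + 1) s" and v2l: "v2 (n - 1) = 2 * m + 1"
    unfolding v2_def vlast_def by simp_all
  have vas: "\<And>s. s < n - 1 \<Longrightarrow> va s = rH (k + 1) s"
    unfolding va_def vlast_def by simp_all
  have rHq: "rH (k + 1) q = 2 * m" using q(2) unfolding rH_def by simp
  have big: "2 * m + 1 < rH (k + 1) s" if s: "s < n - 1" "s \<noteq> q" for s
  proof (cases "W (k + 1 + int s)")
    case (Some b)
    have "b \<noteq> m"
    proof
      assume "b = m"
      moreover have "s < n" using s by simp
      ultimately have "s = q" using dist[OF k(2), of s q m] qn Some q(2) by simp
      then show False using s by simp
    qed
    then have "m < b" using mn s(1) Some by auto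
    then show ?thesis using Some unfolding rH_def by simp
  next
    case None
    have "\<bar>m\<bar> \<le> bnd (k + 1)" using bnd_ge[OF qn q(2)] .
    then show ?thesis using None unfolding rH_def by simp
  qed
  have injv2: "inj_on v2 {..<n}" unfolding v2_def by (rule vodd_inj[OF k(2)])
  have injva: "inj_on va {..<n}" unfolding va_def by (rule vodd_inj[OF k(2)])
  have nc2: "\<not> covf n W (k + 1) v2"
  proof
    assume c: "covf n W (k + 1) v2"
    have "m < a \<longleftrightarrow> v2 q < v2 (n - 1)" using covfD[OF c qn n1 q(2) Wn] .
    then show False using q(3) v2s[OF q(1)] v2l rHq by simp
  qed
  have c2: "covf n W L v2"
  proof (rule atL)
    have pre: "precomp k v2" unfolding v2_def by (rule precomp_rH)
    show "\<exists>i\<in>{L..R}. covf n W i v2 \<and> i - 1 \<notin> {L..R}" by (rule goodL[OF k(1,3) injv2 pre nc2])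
  qed
  have ca: "covf n W (k + 1) va" unfolding va_def by (rule cov_va[OF k(2,4)])
  have nca: "\<not> covf n W L va"
  proof
    assume "covf n W L va"
    then have "L = k + 1" using un[OF injva _ k(2) _ ca] k(1) by auto
    then show False using k(1) by simp
  qed
  obtain c where c: "W (L + int (n - 1)) = Some c"
  proof (cases "W (L + int (n - 1))")
    case None
    have "covf n W L va"
      unfolding covf_def
    proof (intro allI impI)
      fix s t x y assume s: "s < n" and t: "t < n" and x: "W (L + int s) = Some x"
        and y: "W (L + int t) = Some y"
      have "s < n - 1" using not_last[OF s x None] .
      moreover have "t < n - 1" using not_last[OF t y None] .
      ultimately show "x < y \<longleftrightarrow> va s < va t" using covfD[OF c2 s t x y] v2s vas by simp
    qed
    then show ?thesis using nca by simp
  qed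
  have others: "\<forall>s<n-1. s \<noteq> q \<longrightarrow> W (L + int s) = None"
  proof (intro allI impI)
    fix s assume s: "s < n - 1" "s \<noteq> q"
    show "W (L + int s) = None"
    proof (rule ccontr)
      assume "W (L + int s) \<noteq> None"
      then obtain x where x: "W (L + int s) = Some x" by auto
      have sn: "s < n" using s by simp
      have "x < c \<longleftrightarrow> v2 s < v2 (n - 1)" using covfD[OF c2 sn n1 x c] .
      moreover have "x < c \<longleftrightarrow> vmax k s < vmax k (n - 1)" using covfD[OF cM sn n1 x c] .
      ultimately show False using big[OF s] v2s[OF s(1)] v2l vmax_props(3)[OF k(2) s(1)] by simp
    qed
  qed
  obtain e where e: "W (L + int q) = Some e"
  proof (cases "W (L + int q)")
    case None
    have "covf n W L va"
      unfolding covf_def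
    proof (intro allI impI)
      fix s t x y assume s: "s < n" and t: "t < n" and x: "W (L + int s) = Some x"
        and y: "W (L + int t) = Some y"
      have "s \<noteq> q" "t \<noteq> q" using x y None by auto
      then have "\<not> s < n - 1" "\<not> t < n - 1" using others[rule_format, of s] others[rule_format, of t] x y by auto
      then have "s = t" using s t by simp
      then show "x < y \<longleftrightarrow> va s < va t" using x y by simp
    qed
    then show ?thesis using nca by simp
  qed
  have "e < c \<longleftrightarrow> v2 q < v2 (n - 1)" using covfD[OF c2 qn n1 e c] .
  then have "e < c" using v2s[OF q(1)] v2l rHq by simp
  then show ?thesis using others e c by blast
qed

end



context wsys
begin

lemma onesided_L:
  assumes k: "L + 1 \<in> {L..R}" "W L = None" "W (L + int n) = Some a"
    and q: "q < n - 1" "W (L + 1 + int q) = Some m" "a < m"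
    and mn: "\<forall>j<n-1. \<forall>b. W (L + 1 + int j) = Some b \<longrightarrow> m \<le> b"
  shows False
proof -
  have L: "L \<in> {L..R}" using k(1) by simp
  from struct[OF L k q mn] obtain e c where
    others: "\<forall>s<n-1. s \<noteq> q \<longrightarrow> W (L + int s) = None" and
    e: "W (L + int q) = Some e" and c: "W (L + int (n - 1)) = Some c" and ec: "e < c" by blast
  have q1: "q + 1 = n - 1"
  proof (rule ccontr)
    assume "q + 1 \<noteq> n - 1"
    then have "q + 1 < n - 1" using q(1) by simp
    then have H: "W (L + int (q + 1)) = None" using others[rule_format, of "q + 1"] by simp
    have eq: "L + int (q + 1) = L + 1 + int q" by simp
    show False using q(2) H[unfolded eq] by simp
  qed
  have q0: "q \<ge> 1" using q1 n3 by simp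
  have "L + 1 + int (q - 1) = L + int q" using q0 by simp
  then have "W (L + 1 + int (q - 1)) = Some e" using e by simp
  moreover have "q - 1 < n - 1" using q(1) q0 by simp
  ultimately have "m \<le> e" using mn by blast
  have eq2: "L + int (n - 1) = L + 1 + int q" using q1 by simp
  have "c = m" using c[unfolded eq2] q(2) by simp
  then show False using ec \<open>m \<le> e\<close> by simp
qed

lemma onesided_L':
  assumes k: "L + 1 \<in> {L..R}" "W L = None" "W (L + int n) = Some a"
    and ex1: "\<exists>j<n-1. \<exists>b. W (L + 1 + int j) = Some b"
    and gt: "\<And>j b. j < n - 1 \<Longrightarrow> W (L + 1 + int j) = Some b \<Longrightarrow> a < b"
  shows False
proof -
  obtain q m where q: "q < n - 1" "W (L + 1 + int q) = Some m"
    and mn: "\<forall>j<n-1. \<forall>b. W (L + 1 + int j) = Some b \<longrightarrow> m \<le> b"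
    using min_int[OF ex1] by blast
  show False using onesided_L[OF k q gt[OF q] mn] .
qed

lemma main_L:
  assumes k: "L + 1 \<in> {L..R}" "W L = None" "W (L + int n) = Some a"
  shows False
proof -
  have L: "L \<in> {L..R}" using k(1) by simp
  show False
  proof (cases "\<exists>j<n-1. \<exists>b. W (L + 1 + int j) = Some b")
    case False
    then show False using no_int[OF L k(1,2)] by auto
  next
    case True
    note ex1 = this
    show False
    proof (cases "\<exists>j b. j < n - 1 \<and> W (L + 1 + int j) = Some b \<and> a < b";
           cases "\<exists>j b. j < n - 1 \<and> W (L + 1 + int j) = Some b \<and> b < a")
      assume "\<exists>j b. j < n - 1 \<and> W (L + 1 + int j) = Some b \<and> a < b"
        "\<exists>j b. j < n - 1 \<and> W (L + 1 + int j) = Some b \<and> b < a"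
      then show False using twosided[OF L k] by blast
    next
      assume nlo: "\<not> (\<exists>j b. j < n - 1 \<and> W (L + 1 + int j) = Some b \<and> b < a)"
      have "a < b" if jj: "j < n - 1" and mm: "W (L + 1 + int j) = Some b" for j b
      proof -
        have "b \<noteq> a" using int_ne_last[OF k(1) k(3) jj mm] .
        moreover have "\<not> b < a" using nlo jj mm by blast
        ultimately show ?thesis by simp
      qed
      then show False using onesided_L'[OF k ex1] by blast
      next
        assume nhi: "\<not> (\<exists>j b. j < n - 1 \<and> W (L + 1 + int j) = Some b \<and> a < b)"
          and nlo: "\<not> (\<exists>j b. j < n - 1 \<and> W (L + 1 + int j) = Some b \<and> b < a)"
        obtain j b where jb: "j < n - 1" "W (L + 1 + int j) = Some b" using ex1 by blast
        have "b \<noteq> a" using int_ne_last[OF k(1) k(3) jb] .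
        then have "a < b \<or> b < a" by auto
    then show False using nhi nlo jb by blast
    next
      assume nhi: "\<not> (\<exists>j b. j < n - 1 \<and> W (L + 1 + int j) = Some b \<and> a < b)"
      interpret C: wsys n "\<lambda>x. map_option uminus (W x)" L R using wsys_compl[OF self] .
      have gt: "- a < b" if jj: "j < n - 1" and mm: "map_option uminus (W (L + 1 + int j)) = Some b" for j b
      proof -
        obtain b' where b': "W (L + 1 + int j) = Some b'" "b = - b'" using mm by auto
        have "b' \<noteq> a" using int_ne_last[OF k(1) k(3) jj b'(1)] .
        moreover have "\<not> a < b'" using nhi jj b'(1) by blast
        ultimately show ?thesis using b'(2) by simp
      qed
      have ex2: "\<exists>j<n-1. \<exists>b. map_option uminus (W (L + 1 + int j)) = Some b" using ex1 by auto
      have w1: "map_option uminus (W L) = None" and w2: "map_option uminus (W (L + int n)) = Some (- a)"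
        using k(2,3) by simp_all
      show False by (rule C.onesided_L'[OF k(1) w1 w2 ex2 gt])
    qed
  qed
qed

lemma diamond_q:
  assumes sh: "\<forall>s<n-1. s \<noteq> q \<longrightarrow> W (L + int s) = None" "W (L + int q) = Some e"
      "W (L + int (n - 1)) = Some c" "e < c" "q < n - 1"
    and j: "j \<in> {L..R}" "j \<noteq> L" "W (j + int q) = None"
  shows False
proof -
  define v where "v = (\<lambda>s. if s = q then - 2 * bnd j - 2 else rH j s)"
  have qn: "q < n" and n1: "n - 1 < n" using sh(5) by auto
  have inj: "inj_on v {..<n}"
  proof (rule inj_onI)
    fix s t assume s: "s \<in> {..<n}" and t: "t \<in> {..<n}" and ee: "v s = v t"
    show "s = t"
    proof (cases "s = q \<or> t = q")
      case True
      then show ?thesis using ee rH_bounds[of s j] rH_bounds[of t j] s t unfolding v_def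
        by (auto split: if_splits)
    next
      case False
      then show ?thesis using ee rH_inj[OF j(1)] s t unfolding v_def inj_on_def by auto
    qed
  qed
  have cj: "covf n W j v"
    unfolding covf_def
  proof (intro allI impI)
    fix s t x y assume s: "s < n" and t: "t < n" and x: "W (j + int s) = Some x"
      and y: "W (j + int t) = Some y"
    have "s \<noteq> q" "t \<noteq> q" using x y j(3) by auto
    then show "x < y \<longleftrightarrow> v s < v t" using x y unfolding v_def rH_def by simp
  qed
  have cL: "covf n W L v"
    unfolding covf_def
  proof (intro allI impI)
    fix s t x y assume s: "s < n" and t: "t < n" and x: "W (L + int s) = Some x"
      and y: "W (L + int t) = Some y"
    have sq: "s = q \<or> s = n - 1"
    proof (cases "s < n - 1")
      case True then show ?thesis using sh(1)[rule_format, of s] x by auto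
    next
      case False then have "s = n - 1" using s by arith
      then show ?thesis by simp
    qed
    have tq: "t = q \<or> t = n - 1"
    proof (cases "t < n - 1")
      case True then show ?thesis using sh(1)[rule_format, of t] y by auto
    next
      case False then have "t = n - 1" using t by arith
      then show ?thesis by simp
    qed
    have lowq: "v q < v (n - 1)" using rH_bounds[of "n - 1" j] n1 sh(5) unfolding v_def by auto
    show "x < y \<longleftrightarrow> v s < v t"
      using sq tq x y sh(2,3,4,5) lowq by auto
  qed
  have "j = L" using un[OF inj j(1) _ cj cL] j(1) by auto
  then show False using j(2) by simp
qed

lemma onesided:
  assumes k: "k \<in> {L..R}" "k + 1 \<in> {L..R}" "W k = None" "W (k + int n) = Some a"
    and q: "q < n - 1" "W (k + 1 + int q) = Some m" "a < m"
    and mn: "\<forall>j<n-1. \<forall>b. W (k + 1 + int j) = Some b \<longrightarrow> m \<le> b"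
  shows False
proof (cases "k = L")
  case True
  have "W L = None" "W (L + int n) = Some a" "W (L + 1 + int q) = Some m"
    "\<forall>j<n-1. \<forall>b. W (L + 1 + int j) = Some b \<longrightarrow> m \<le> b"
    using k(3,4) q(2) mn True by simp_all
  then show False using onesided_L[OF k(2)[unfolded True] _ _ q(1) _ q(3)] by blast
next
  case False
  then have kL: "L < k" using k(1) by simp
  from struct[OF k q mn] obtain e c where
    others: "\<forall>s<n-1. s \<noteq> q \<longrightarrow> W (L + int s) = None" and
    e: "W (L + int q) = Some e" and c: "W (L + int (n - 1)) = Some c" and ec: "e < c" by blast
  note dq = diamond_q[OF others e c ec q(1)]
  have L1: "L + 1 \<in> {L..R}" and L2: "L + 2 \<in> {L..R}" using kL k(2) by auto
  have qn2: "q = n - 2"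
  proof (rule ccontr)
    assume "q \<noteq> n - 2"
    then have "q + 1 < n - 1" using q(1) by simp
    then have H: "W (L + int (q + 1)) = None" using others[rule_format, of "q + 1"] by simp
    have eq: "L + int (q + 1) = L + 1 + int q" by simp
    show False using dq[OF L1] H[unfolded eq] by simp
  qed
  have "0 < n - 1" "0 \<noteq> q" using qn2 n3 by auto
  then have "W (L + int 0) = None" using others[rule_format, of 0] by simp
  then have WL: "W L = None" by simp
  have eqn: "L + 2 + int q = L + int n" using qn2 n3 by simp
  show False
  proof (cases "W (L + int n)")
    case None
    then show False using dq[OF L2] eqn by simp
  next
    case (Some a')
    then show False using main_L[OF L1 WL] by simp
  qed
qed

lemma main:
  assumes k: "k \<in> {L..R}" "k + 1 \<in> {L..R}" "W k = None" "W (k + int n) = Some a"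
  shows False
proof (cases "\<exists>j<n-1. \<exists>b. W (k + 1 + int j) = Some b")
  case False
  then show False using no_int[OF k(1,2,3)] by auto
next
  case True
  note ex1 = this
  show False
  proof (cases "\<exists>j b. j < n - 1 \<and> W (k + 1 + int j) = Some b \<and> a < b";
         cases "\<exists>j b. j < n - 1 \<and> W (k + 1 + int j) = Some b \<and> b < a")
    assume "\<exists>j b. j < n - 1 \<and> W (k + 1 + int j) = Some b \<and> a < b"
      "\<exists>j b. j < n - 1 \<and> W (k + 1 + int j) = Some b \<and> b < a"
    then show False using twosided[OF k] by blast
  next
    assume nlo: "\<not> (\<exists>j b. j < n - 1 \<and> W (k + 1 + int j) = Some b \<and> b < a)"
    have gt: "a < b" if jj: "j < n - 1" and mm: "W (k + 1 + int j) = Some b" for j b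
    proof -
      have "b \<noteq> a" using int_ne_last[OF k(2) k(4) jj mm] .
      moreover have "\<not> b < a" using nlo jj mm by blast
      ultimately show ?thesis by simp
    qed
    obtain q m where q: "q < n - 1" "W (k + 1 + int q) = Some m"
      and mn: "\<forall>j<n-1. \<forall>b. W (k + 1 + int j) = Some b \<longrightarrow> m \<le> b"
      using min_int[OF ex1] by blast
    show False using onesided[OF k q gt[OF q] mn] .
  next
    assume nhi: "\<not> (\<exists>j b. j < n - 1 \<and> W (k + 1 + int j) = Some b \<and> a < b)"
      and nlo: "\<not> (\<exists>j b. j < n - 1 \<and> W (k + 1 + int j) = Some b \<and> b < a)"
    obtain j b where jb: "j < n - 1" "W (k + 1 + int j) = Some b" using ex1 by blast
    have "b \<noteq> a" using int_ne_last[OF k(2) k(4) jb] .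
    then have "a < b \<or> b < a" by auto
    then show False using nhi nlo jb by blast
  next
    assume nhi: "\<not> (\<exists>j b. j < n - 1 \<and> W (k + 1 + int j) = Some b \<and> a < b)"
    interpret C: wsys n "\<lambda>x. map_option uminus (W x)" L R using wsys_compl[OF self] .
    have gt: "- a < b" if jj: "j < n - 1" and mm: "map_option uminus (W (k + 1 + int j)) = Some b" for j b
    proof -
      obtain b' where b': "W (k + 1 + int j) = Some b'" "b = - b'" using mm by auto
      have "b' \<noteq> a" using int_ne_last[OF k(2) k(4) jj b'(1)] .
      moreover have "\<not> a < b'" using nhi jj b'(1) by blast
      ultimately show ?thesis using b'(2) by simp
    qed
    have ex2: "\<exists>j<n-1. \<exists>b. map_option uminus (W (k + 1 + int j)) = Some b" using ex1 by auto
    obtain q m where q: "q < n - 1" "map_option uminus (W (k + 1 + int q)) = Some m"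
      and mn: "\<forall>j<n-1. \<forall>b. map_option uminus (W (k + 1 + int j)) = Some b \<longrightarrow> m \<le> b"
      using C.min_int[OF ex2] by blast
    have w: "map_option uminus (W k) = None" "map_option uminus (W (k + int n)) = Some (- a)"
      using k(3,4) by simp_all
    show False by (rule C.onesided[OF k(1,2) w q gt[OF q] mn])
  qed
qed

end

definition Ww :: "pword \<Rightarrow> int \<Rightarrow> int option" where
  "Ww u x = (if 0 \<le> x \<and> x < int (length u) then map_option int (u ! nat x) else None)"

definition Wc :: "pword \<Rightarrow> int \<Rightarrow> int option" where
  "Wc u x = map_option int (u ! nat (x mod int (length u)))"

lemma covers_iff:
  assumes len: "length f = n" and inj: "inj_on v {..<n}"
    and F: "\<And>s. s < n \<Longrightarrow> G s = map_option int (f ! s)"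
  shows "(\<forall>s<n. \<forall>t<n. \<forall>a b. G s = Some a \<longrightarrow> G t = Some b \<longrightarrow> (a < b \<longleftrightarrow> v s < v t))
         \<longleftrightarrow> covers f (Pm n v)"
proof
  assume h: "\<forall>s<n. \<forall>t<n. \<forall>a b. G s = Some a \<longrightarrow> G t = Some b \<longrightarrow> (a < b \<longleftrightarrow> v s < v t)"
  show "covers f (Pm n v)"
    unfolding covers_def
  proof (intro conjI allI impI)
    show "length f = length (Pm n v)" using len by (simp add: Pm_def)
  next
    fix s t a b assume s: "s < length f" and t: "t < length f" and a: "f ! s = Some a" and b: "f ! t = Some b"
    have sn: "s < n" "t < n" using s t len by auto
    have Gs: "G s = Some (int a)" "G t = Some (int b)" using F a b sn by auto
    have "int a < int b \<longleftrightarrow> v s < v t" using h sn Gs by blast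
    then show "a < b \<longleftrightarrow> Pm n v ! s < Pm n v ! t" using s t len by (simp add: Pm_nth rk_less[OF inj])
  qed
next
  assume h: "covers f (Pm n v)"
  show "\<forall>s<n. \<forall>t<n. \<forall>a b. G s = Some a \<longrightarrow> G t = Some b \<longrightarrow> (a < b \<longleftrightarrow> v s < v t)"
  proof (intro allI impI)
    fix s t a b assume s: "s < n" and t: "t < n" and a: "G s = Some a" and b: "G t = Some b"
    obtain a' where a': "f ! s = Some a'" "a = int a'" using a F[OF s] by auto
    obtain b' where b': "f ! t = Some b'" "b = int b'" using b F[OF t] by auto
    have "s < length f" "t < length f" using s t len by auto
    then have "a' < b' \<longleftrightarrow> Pm n v ! s < Pm n v ! t" using h a'(1) b'(1) unfolding covers_def by blast
    then show "a < b \<longleftrightarrow> v s < v t" using a'(2) b'(2) s t by (simp add: Pm_nth rk_less[OF inj])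
  qed
qed

lemma covf_word:
  assumes "0 \<le> i" "i + int n \<le> int (length u)" "inj_on v {..<n}"
  shows "covf n (Ww u) i v \<longleftrightarrow> covers (lfactor u n (nat i)) (Pm n v)"
proof -
  have F: "Ww u (i + int s) = map_option int (lfactor u n (nat i) ! s)" if "s < n" for s
  proof -
    have "0 \<le> i + int s" "i + int s < int (length u)" using assms that by auto
    moreover have "nat (i + int s) = nat i + s" using assms(1) by simp
    ultimately show ?thesis using that unfolding Ww_def lfactor_def by simp
  qed
  show ?thesis unfolding covf_def
    by (rule covers_iff[where G="\<lambda>s. Ww u (i + int s)"]) (use F assms(3) in \<open>auto simp: lfactor_def\<close>)
qed

lemma word_sys:
  assumes up: "is_upword n u" and n3: "n \<ge> 3"
  shows "wsys n (Ww u) 0 (int (length u) - int n)"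
  unfolding wsys_def
proof
  show "3 \<le> n" using n3 .
  show "s = t" if i: "i \<in> {0..int (length u) - int n}" and st: "s < n" "t < n"
    and a: "Ww u (i + int s) = Some a" "Ww u (i + int t) = Some a" for i s t a
  proof -
    have i0: "0 \<le> i" "i + int n \<le> int (length u)" using i by auto
    have "\<forall>i. i + n \<le> length u \<longrightarrow> distinct_ints (lfactor u n i)" using up unfolding is_upword_def by blast
    moreover have "nat i + n \<le> length u" using i0 by auto
    ultimately have d: "distinct_ints (lfactor u n (nat i))" by blast
    have F: "Ww u (i + int s') = map_option int (lfactor u n (nat i) ! s')" if "s' < n" for s'
    proof -
      have "0 \<le> i + int s'" "i + int s' < int (length u)" using i0 that by auto
      moreover have "nat (i + int s') = nat i + s'" using i0(1) by simp
      ultimately show ?thesis using that unfolding Ww_def lfactor_def by simp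
    qed
    obtain x where x: "lfactor u n (nat i) ! s = Some x" "a = int x" using a(1) F[OF st(1)] by auto
    obtain y where y: "lfactor u n (nat i) ! t = Some y" "a = int y" using a(2) F[OF st(2)] by auto
    have "x = y" using x(2) y(2) by simp
    then show ?thesis using distinct_ints_pos[OF d _ _ x(1)] y(1) st by (simp add: lfactor_def)
  qed
  show "\<exists>i\<in>{0..int (length u) - int n}. covf n (Ww u) i v" if inj: "inj_on v {..<n}" for v
  proof -
    obtain i where i: "i + n \<le> length u" "covers (lfactor u n i) (Pm n v)"
      using up Pm_perm[OF inj] unfolding is_upword_def by blast
    have "covf n (Ww u) (int i) v" using covf_word[of "int i" n u v] i inj by simp
    then show ?thesis using i(1) by (intro bexI[of _ "int i"]) auto
  qed
  show "i = j" if inj: "inj_on v {..<n}" and ij: "i \<in> {0..int (length u) - int n}" "j \<in> {0..int (length u) - int n}"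
    and c: "covf n (Ww u) i v" "covf n (Ww u) j v" for v i j
  proof -
    have ci: "covers (lfactor u n (nat i)) (Pm n v)" using covf_word[of i n u v] ij c inj by auto
    have cj: "covers (lfactor u n (nat j)) (Pm n v)" using covf_word[of j n u v] ij c inj by auto
    have "\<exists>!i. i + n \<le> length u \<and> covers (lfactor u n i) (Pm n v)"
      using up Pm_perm[OF inj] unfolding is_upword_def by blast
    moreover have "nat i + n \<le> length u" "nat j + n \<le> length u" using ij by auto
    ultimately have "nat i = nat j" using ci cj by blast
    then show "i = j" using ij by auto
  qed
  show "\<And>i j x. i = j \<Longrightarrow> Ww u (i + x) = Ww u (j + x)" by simp
  show "\<And>i::int. i \<noteq> i + 1" by simp
  show "\<And>i::int. i + 1 \<noteq> i" by simp
qed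

lemma cidx:
  assumes "0 < N"
  shows "nat ((i + int s) mod int N) = (nat (i mod int N) + s) mod N"
proof -
  have r0: "0 \<le> i mod int N" using assms by simp
  have "(i + int s) mod int N = (i mod int N + int s) mod int N" by (simp add: mod_add_left_eq)
  also have "i mod int N + int s = int (nat (i mod int N) + s)" using r0 by simp
  also have "int (nat (i mod int N) + s) mod int N = int ((nat (i mod int N) + s) mod N)"
    by (simp add: of_nat_mod)
  finally show ?thesis by simp
qed

lemma covf_cyc:
  assumes "0 < length u" "inj_on v {..<n}"
  shows "covf n (Wc u) i v \<longleftrightarrow> covers (cfactor u n (nat (i mod int (length u)))) (Pm n v)"
proof -
  have F: "Wc u (i + int s) = map_option int (cfactor u n (nat (i mod int (length u))) ! s)" if "s < n" for s
    using that cidx[OF assms(1), of i s] unfolding Wc_def cfactor_def by simp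
  show ?thesis unfolding covf_def
    by (rule covers_iff[where G="\<lambda>s. Wc u (i + int s)"]) (use F assms(2) in \<open>auto simp: cfactor_def\<close>)
qed

lemma cyc_sys:
  assumes up: "is_upcycle n u" and n3: "n \<ge> 3"
  shows "sys n (Wc u) UNIV (\<lambda>i j. i mod int (length u) = j mod int (length u))"
proof -
  have N0: "0 < length u" using up n3 unfolding is_upcycle_def by auto
  have N3: "3 \<le> length u" using up n3 unfolding is_upcycle_def by auto
  have rlt: "nat (i mod int (length u)) < length u" for i using N0
    by (metis nat_less_iff of_nat_0_less_iff pos_mod_bound pos_mod_sign)
  show ?thesis
  proof
    show "3 \<le> n" using n3 .
    show "s = t" if st: "s < n" "t < n" and a: "Wc u (i + int s) = Some a" "Wc u (i + int t) = Some a" for i s t a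
    proof -
      have "\<forall>i. i < length u \<longrightarrow> distinct_ints (cfactor u n i)" using up unfolding is_upcycle_def by blast
      then have d: "distinct_ints (cfactor u n (nat (i mod int (length u))))" using rlt by blast
      have F: "Wc u (i + int s') = map_option int (cfactor u n (nat (i mod int (length u))) ! s')" if "s' < n" for s'
        using that cidx[OF N0, of i s'] unfolding Wc_def cfactor_def by simp
      obtain x where x: "cfactor u n (nat (i mod int (length u))) ! s = Some x" "a = int x" using a(1) F[OF st(1)] by auto
      obtain y where y: "cfactor u n (nat (i mod int (length u))) ! t = Some y" "a = int y" using a(2) F[OF st(2)] by auto
      have "x = y" using x(2) y(2) by simp
      then show ?thesis using distinct_ints_pos[OF d _ _ x(1)] y(1) st by (simp add: cfactor_def)
    qed
    show "\<exists>i\<in>UNIV. covf n (Wc u) i v" if inj: "inj_on v {..<n}" for v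
    proof -
      obtain i where i: "i < length u" "covers (cfactor u n i) (Pm n v)"
        using up Pm_perm[OF inj] unfolding is_upcycle_def by blast
      have "nat (int i mod int (length u)) = i" using i(1) by (simp add: of_nat_mod[symmetric] del: of_nat_mod)
      then have "covf n (Wc u) (int i) v" using covf_cyc[OF N0 inj, of "int i"] i by simp
      then show ?thesis by blast
    qed
    show "i mod int (length u) = j mod int (length u)" if inj: "inj_on v {..<n}"
      and c: "covf n (Wc u) i v" "covf n (Wc u) j v" for v i j
    proof -
      have ci: "covers (cfactor u n (nat (i mod int (length u)))) (Pm n v)" using covf_cyc[OF N0 inj] c by auto
      have cj: "covers (cfactor u n (nat (j mod int (length u)))) (Pm n v)" using covf_cyc[OF N0 inj] c by auto
      have "\<exists>!i. i < length u \<and> covers (cfactor u n i) (Pm n v)"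
        using up Pm_perm[OF inj] unfolding is_upcycle_def by blast
      then have "nat (i mod int (length u)) = nat (j mod int (length u))" using ci cj rlt by blast
      moreover have "0 \<le> i mod int (length u)" "0 \<le> j mod int (length u)" using N0 by simp_all
      ultimately show ?thesis by simp
    qed
    show "Wc u (i + x) = Wc u (j + x)" if "i mod int (length u) = j mod int (length u)" for i j x
    proof -
      have "(i + x) mod int (length u) = (j + x) mod int (length u)"
        using that by (metis mod_add_left_eq)
      then show ?thesis unfolding Wc_def by simp
    qed
    show "\<not> i mod int (length u) = (i + 1) mod int (length u)" for i
    proof
      assume "i mod int (length u) = (i + 1) mod int (length u)"
      then have "int (length u) dvd (i - (i + 1))" by (simp add: mod_eq_dvd_iff)
      then have "int (length u) dvd 1" by simp
      then show False using N3 by simp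
    qed
    show "\<not> (i + 1) mod int (length u) = i mod int (length u)" for i
    proof
      assume "(i + 1) mod int (length u) = i mod int (length u)"
      then have "int (length u) dvd ((i + 1) - i)" by (simp add: mod_eq_dvd_iff)
      then have "int (length u) dvd 1" by simp
      then show False using N3 by simp
    qed
  qed
qed

theorem lemma5:
  fixes n k :: nat and u :: pword
  assumes "n \<ge> 3"
  shows "(is_upword n u \<longrightarrow> k < length u \<longrightarrow> u ! k = None \<longrightarrow>
            (k + n < length u \<longrightarrow> u ! (k + n) = None) \<and>
            (n \<le> k \<longrightarrow> u ! (k - n) = None))
       \<and> (is_upcycle n u \<longrightarrow> k < length u \<longrightarrow> u ! k = None \<longrightarrow>
            u ! ((k + n) mod length u) = None \<and>
            u ! nat ((int k - int n) mod int (length u)) = None)"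
proof (intro conjI impI)
  assume up: "is_upword n u" and kN: "k < length u" and uk: "u ! k = None"
  have ws: "wsys n (Ww u) 0 (int (length u) - int n)" using word_sys[OF up assms] .
  have Wk: "Ww u (int k) = None" using kN uk unfolding Ww_def by simp
  show "k + n < length u \<Longrightarrow> u ! (k + n) = None"
  proof (rule ccontr)
    assume kn: "k + n < length u" and "u ! (k + n) \<noteq> None"
    then obtain a where a: "u ! (k + n) = Some a" by auto
    have "Ww u (int k + int n) = Some (int a)" using kn a unfolding Ww_def by (simp add: nat_add_distrib)
    moreover have "int k \<in> {0..int (length u) - int n}" "int k + 1 \<in> {0..int (length u) - int n}" using kn by auto
    ultimately show False using wsys.main[OF ws, of "int k" "int a"] Wk by blast
  qed
  show "n \<le> k \<Longrightarrow> u ! (k - n) = None"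
  proof (rule ccontr)
    assume nk: "n \<le> k" and "u ! (k - n) \<noteq> None"
    then obtain a where a: "u ! (k - n) = Some a" by auto
    have wr: "wsys n (\<lambda>x. Ww u (- x)) (- (int (length u) - int n) - int n + 1) (- 0 - int n + 1)"
      by (rule wsys_rev[OF ws])
    have "Ww u (- (- int k + int n)) = Some (int a)"
    proof -
      have e: "- (- int k + int n) = int (k - n)" using nk by (simp add: of_nat_diff)
      have "k - n < length u" using kN by simp
      then show ?thesis unfolding e Ww_def using a by simp
    qed
    moreover have "Ww u (- (- int k)) = None" using Wk by simp
    moreover have "- int k \<in> {- (int (length u) - int n) - int n + 1 .. - 0 - int n + 1}"
      "- int k + 1 \<in> {- (int (length u) - int n) - int n + 1 .. - 0 - int n + 1}" using nk kN by auto
    ultimately show False using wsys.main[OF wr, of "- int k" "int a"] by blast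
  qed
next
  assume up: "is_upcycle n u" and kN: "k < length u" and uk: "u ! k = None"
  have cs: "sys n (Wc u) UNIV (\<lambda>i j. i mod int (length u) = j mod int (length u))" using cyc_sys[OF up assms] .
  have Wk: "Wc u (int k) = None" using kN uk unfolding Wc_def by (simp add: of_nat_mod[symmetric] del: of_nat_mod)
  show "u ! ((k + n) mod length u) = None"
  proof (rule ccontr)
    assume "u ! ((k + n) mod length u) \<noteq> None"
    then obtain a where a: "u ! ((k + n) mod length u) = Some a" by auto
    have e: "nat ((int k + int n) mod int (length u)) = (k + n) mod length u"
      by (metis nat_int of_nat_add of_nat_mod)
    have "Wc u (int k + int n) = Some (int a)" using a unfolding Wc_def e by simp
    then show False using sys.main_cyc[OF cs refl Wk] by simp
  qed
  show "u ! nat ((int k - int n) mod int (length u)) = None"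
  proof (rule ccontr)
    assume "u ! nat ((int k - int n) mod int (length u)) \<noteq> None"
    then obtain a where a: "u ! nat ((int k - int n) mod int (length u)) = Some a" by auto
    have cr: "sys n (\<lambda>x. Wc u (- x)) ((\<lambda>i. - i - int n + 1) ` UNIV)
      (\<lambda>i j. (- i - int n + 1) mod int (length u) = (- j - int n + 1) mod int (length u))"
      using sys_rev[OF cs] .
    have U: "(\<lambda>i. - i - int n + 1) ` UNIV = UNIV"
    proof (intro set_eqI iffI)
      fix x :: int show "x \<in> (\<lambda>i. - i - int n + 1) ` UNIV"
        by (rule image_eqI[of _ _ "- x - int n + 1"]) auto
    qed auto
    have "Wc u (- (- int k + int n)) = Some (int a)" using a unfolding Wc_def by (simp add: algebra_simps)
    moreover have "Wc u (- (- int k)) = None" using Wk by simp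
    ultimately show False using sys.main_cyc[OF cr U, of "- int k" "int a"] by blast
  qed
qed

end
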